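(* Let $M$ be a nontrivial monoid with identity $e$, $X$ a set and $\tau,\tau'$ topologies on $X$ with $\tau'$ strictly finer than $\tau$. In $\mathscr{C}=\mathbf{Top}$, let $\alpha$ be the partial action datum of $M$ on $(X,\tau)$ given by $\alpha(e)=[(X,\tau),\mathrm{id}_X,\mathrm{id}_X]$ and $\alpha(m)=[(X,\tau'),\mathrm{id}_X,\mathrm{id}_X]$ for $m\neq e$ (where $\mathrm{id}_X\colon(X,\tau')\to(X,\tau)$ is the continuous identity map). Then $\alpha$ is a strong partial action of $M$ on $(X,\tau)$, but $\alpha$ is not the restriction of any global action of $M$ on any space $(Y,\upsilon)$ via any monomorphism $\iota\colon(X,\tau)\to(Y,\upsilon)$ in $\mathbf{Top}$.
   Context: A partial action datum of $M$ on an object $X$ of a category with pullbacks $\mathscr{C}$ assigns to each $m\in M$ an isomorphism class of spans $[\operatorname{dom}\alpha_m,\iota_m,\alpha_m]$ with $\iota_m\colon\operatorname{dom}\alpha_m\to X$ a monomorphism and $\alpha_m\colon\operatorname{dom}\alpha_m\to X$ (isomorphism of spans: an isomorphism of apexes commuting with both legs). For $m,n\in M$, let $\alpha_m^{-1}(\operatorname{dom}\alpha_n)$ be a pullback of $\alpha_m$ and $\iota_n$ with projections $\hat\iota^m_n$ to $\operatorname{dom}\alpha_m$ and $\hat\alpha^n_m$ to $\operatorname{dom}\alpha_n$, and $\operatorname{dom}\alpha_m\cap\operatorname{dom}\alpha_k$ a pullback of $\iota_m$ and $\iota_k$ with projections $\pi^{m,k}_1$ to $\operatorname{dom}\alpha_m$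 and $\pi^{m,k}_2$ to $\operatorname{dom}\alpha_k$. A strong partial action is a datum with $\alpha(e)=[X,\mathrm{id}_X,\mathrm{id}_X]$ such that for all $m,n$ there is an isomorphism $\theta\colon\alpha_m^{-1}(\operatorname{dom}\alpha_n)\to\operatorname{dom}\alpha_m\cap\operatorname{dom}\alpha_{nm}$ with $\iota_{nm}\circ\pi^{m,nm}_2\circ\theta=\iota_m\circ\hat\iota^m_n$ and $\alpha_{nm}\circ\pi^{m,nm}_2\circ\theta=\alpha_n\circ\hat\alpha^n_m$. A global action of $M$ on $Y$ is a family of morphisms $\beta_m\colon Y\to Y$ with $\beta_e=\mathrm{id}_Y$, $\beta_n\circ\beta_m=\beta_{nm}$. Given a global action $\beta$ on $Y$ and a monomorphism $\iota\colon X\to Y$, the restriction of $\beta$ via $\iota$ is the datum $\alpha$ on $X$ such that for each $m$ the square $\beta_m\circ\iota\circ\iota_m=\iota\circ\alpha_m$ is a pullback. *)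

theory Defs
  imports "HOL-Analysis.Analysis"
begin

definition pb :: "'a topology \<Rightarrow> 'b topology \<Rightarrow> ('a \<Rightarrow> 'c) \<Rightarrow> ('b \<Rightarrow> 'c) \<Rightarrow> ('a \<times> 'b) topology" where
  "pb A B f g = subtopology (prod_topology A B) {(a, b). f a = g b}"

text \<open>Monomorphisms in Top are exactly the injective continuous maps.\<close>
definition top_mono :: "'a topology \<Rightarrow> 'b topology \<Rightarrow> ('a \<Rightarrow> 'b) \<Rightarrow> bool" where
  "top_mono A B f \<longleftrightarrow> continuous_map A B f \<and> inj_on f (topspace A)"

text \<open>A partial action datum of the monoid 'm on the space X: for each m a
  representative span (D m, inc m, act m) with inc m a monomorphism.\<close>
definition partial_action_datum ::
  "'a topology \<Rightarrow> ('m \<Rightarrow> 'd topology) \<Rightarrow> ('m \<Rightarrow> 'd \<Rightarrow> 'a) \<Rightarrow> ('m \<Rightarrow> 'd \<Rightarrow> 'a) \<Rightarrow> bool" where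
  "partial_action_datum X D inc act \<longleftrightarrow>
     (\<forall>m. top_mono (D m) X (inc m) \<and> continuous_map (D m) X (act m))"

text \<open>Strong partial action (pullbacks taken as the canonical ones; the
  alpha(e) condition says the span (D 1, inc 1, act 1) is isomorphic to (X, id, id)).\<close>
definition strong_partial_action ::
  "'a topology \<Rightarrow> ('m::monoid_mult \<Rightarrow> 'd topology) \<Rightarrow> ('m \<Rightarrow> 'd \<Rightarrow> 'a) \<Rightarrow> ('m \<Rightarrow> 'd \<Rightarrow> 'a) \<Rightarrow> bool" where
  "strong_partial_action X D inc act \<longleftrightarrow>
     partial_action_datum X D inc act \<and>
     (\<exists>h. homeomorphic_map (D 1) X h \<and>
          (\<forall>x\<in>topspace (D 1). h x = inc 1 x \<and> h x = act 1 x)) \<and>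
     (\<forall>m n. \<exists>\<theta>.
        homeomorphic_map (pb (D m) (D n) (act m) (inc n))
                         (pb (D m) (D (n * m)) (inc m) (inc (n * m))) \<theta> \<and>
        (\<forall>p\<in>topspace (pb (D m) (D n) (act m) (inc n)).
           inc (n * m) (snd (\<theta> p)) = inc m (fst p) \<and>
           act (n * m) (snd (\<theta> p)) = act n (snd p)))"

definition global_action :: "'y topology \<Rightarrow> ('m::monoid_mult \<Rightarrow> 'y \<Rightarrow> 'y) \<Rightarrow> bool" where
  "global_action Y \<beta> \<longleftrightarrow>
     (\<forall>m. continuous_map Y Y (\<beta> m)) \<and>
     (\<forall>y\<in>topspace Y. \<beta> 1 y = y) \<and>
     (\<forall>m n. \<forall>y\<in>topspace Y. \<beta> n (\<beta> m y) = \<beta> (n * m) y)"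

definition is_pullback_square ::
  "'a topology \<Rightarrow> 'b topology \<Rightarrow> 'c topology \<Rightarrow> ('a \<Rightarrow> 'c) \<Rightarrow> ('b \<Rightarrow> 'c)
   \<Rightarrow> 'p topology \<Rightarrow> ('p \<Rightarrow> 'a) \<Rightarrow> ('p \<Rightarrow> 'b) \<Rightarrow> bool" where
  "is_pullback_square A B C f g P p1 p2 \<longleftrightarrow>
     continuous_map A C f \<and> continuous_map B C g \<and>
     continuous_map P A p1 \<and> continuous_map P B p2 \<and>
     (\<forall>x\<in>topspace P. f (p1 x) = g (p2 x)) \<and>
     homeomorphic_map P (pb A B f g) (\<lambda>x. (p1 x, p2 x))"

definition is_restriction ::
  "'a topology \<Rightarrow> ('m::monoid_mult \<Rightarrow> 'd topology) \<Rightarrow> ('m \<Rightarrow> 'd \<Rightarrow> 'a) \<Rightarrow> ('m \<Rightarrow> 'd \<Rightarrow> 'a)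
   \<Rightarrow> 'y topology \<Rightarrow> ('m \<Rightarrow> 'y \<Rightarrow> 'y) \<Rightarrow> ('a \<Rightarrow> 'y) \<Rightarrow> bool" where
  "is_restriction X D inc act Y \<beta> \<iota> \<longleftrightarrow>
     partial_action_datum X D inc act \<and>
     (\<forall>m. is_pullback_square X X Y (\<lambda>x. \<beta> m (\<iota> x)) \<iota> (D m) (inc m) (act m))"

end

theory Submission
  imports Defs
begin

lemma coarser_cont:
  assumes "topspace A = topspace C" "\<forall>U. openin C U \<longrightarrow> openin A U"
  shows "continuous_map A C id"
  unfolding continuous_map_def
proof (intro conjI allI impI)
  show "id \<in> topspace A \<rightarrow> topspace C" using assms(1) by simp
next
  fix U assume "openin C U"
  hence "openin A U" "U \<subseteq> topspace A" using assms openin_subset by metis+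
  moreover have "{x \<in> topspace A. id x \<in> U} = U" using \<open>U \<subseteq> topspace A\<close> by auto
  ultimately show "openin A {x \<in> topspace A. id x \<in> U}" by simp
qed

lemma diag_cont:
  assumes "topspace A = X" "topspace C = X" "\<forall>U. openin C U \<longrightarrow> openin A U"
  shows "continuous_map (subtopology (prod_topology A B) {(a,b). a = b})
                        (subtopology (prod_topology A C) {(a,b). a = b}) id"
proof -
  let ?S = "subtopology (prod_topology A B) {(a,b). a = b}"
  have f: "continuous_map ?S A fst"
    by (metis continuous_map_fst continuous_map_from_subtopology)
  have cid: "continuous_map A C id"
    using assms coarser_cont by metis
  have "continuous_map ?S C fst" using continuous_map_compose[OF f cid] by (simp add: o_def)
  hence s: "continuous_map ?S C snd"
    by (rule continuous_map_eq) auto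
  have "continuous_map ?S (prod_topology A C) id"
    using f s by (simp add: continuous_map_pairwise o_def)
  moreover have "id ` topspace ?S \<subseteq> {(a,b). a = b}" by auto
  ultimately show ?thesis
    by (simp add: continuous_map_in_subtopology)
qed

lemma diag_homeo:
  assumes "topspace A = X" "topspace B = X" "topspace C = X"
    "\<forall>U. openin C U \<longrightarrow> openin A U" "\<forall>U. openin B U \<longrightarrow> openin A U"
  shows "homeomorphic_map (subtopology (prod_topology A B) {(a,b). a = b})
                        (subtopology (prod_topology A C) {(a,b). a = b}) id"
proof (rule homeomorphic_maps_imp_map[where g=id])
  have "continuous_map (subtopology (prod_topology A B) {(a,b). a = b})
                        (subtopology (prod_topology A C) {(a,b). a = b}) id"
    by (rule diag_cont[of A X C B]) (use assms in auto)
  moreover have "continuous_map (subtopology (prod_topology A C) {(a,b). a = b})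
                        (subtopology (prod_topology A B) {(a,b). a = b}) id"
    by (rule diag_cont[of A X B C]) (use assms in auto)
  ultimately show "homeomorphic_maps (subtopology (prod_topology A B) {(a,b). a = b})
                        (subtopology (prod_topology A C) {(a,b). a = b}) id id"
    unfolding homeomorphic_maps_def by simp
qed

lemma pb_id: "pb A B id id = subtopology (prod_topology A B) {(a,b). a = b}"
  by (simp add: pb_def)

theorem mainTheorem18:
  fixes \<tau> \<tau>' :: "'a topology" and X :: "'a set"
  assumes nontriv: "\<exists>m::'m::monoid_mult. m \<noteq> 1"
    and "topspace \<tau> = X" and "topspace \<tau>' = X"
    and "\<forall>U. openin \<tau> U \<longrightarrow> openin \<tau>' U" and "\<tau>' \<noteq> \<tau>"
  shows "strong_partial_action \<tau> (\<lambda>m::'m. if m = 1 then \<tau> else \<tau>') (\<lambda>m. id) (\<lambda>m. id)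
       \<and> \<not> (\<exists>(Y :: 'y topology) \<beta> \<iota>. global_action Y \<beta> \<and> top_mono \<tau> Y \<iota> \<and>
              is_restriction \<tau> (\<lambda>m::'m. if m = 1 then \<tau> else \<tau>') (\<lambda>m. id) (\<lambda>m. id) Y \<beta> \<iota>)"
proof
  define D where "D = (\<lambda>m::'m. if m = 1 then \<tau> else \<tau>')"
  have tsD: "topspace (D k) = X" for k using assms(2,3) by (simp add: D_def)
  have opD: "\<forall>U. openin (D k) U \<longrightarrow> openin \<tau>' U" for k using assms(4) by (simp add: D_def)
  have opD2: "\<forall>U. openin \<tau> U \<longrightarrow> openin (D k) U" for k using assms(4) by (simp add: D_def)
  have cD: "continuous_map (D k) \<tau> id" for k
    by (rule coarser_cont) (use tsD assms(2) opD2 in auto)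
  have pad: "partial_action_datum \<tau> D (\<lambda>m. id) (\<lambda>m. id)"
    unfolding partial_action_datum_def top_mono_def using cD by simp
  have h1: "\<exists>h. homeomorphic_map (D 1) \<tau> h \<and>
          (\<forall>x\<in>topspace (D 1). h x = id x \<and> h x = id x)"
    by (rule exI[of _ id]) (simp add: D_def)
  have h2: "\<exists>\<theta>.
        homeomorphic_map (pb (D m) (D n) (id) (id))
                         (pb (D m) (D (n * m)) (id) (id)) \<theta> \<and>
        (\<forall>p\<in>topspace (pb (D m) (D n) (id) (id)).
           id (snd (\<theta> p)) = id (fst p) \<and>
           id (snd (\<theta> p)) = id (snd p))" for m n
  proof (rule exI[of _ id], intro conjI)
    show "homeomorphic_map (pb (D m) (D n) (id) (id))
                         (pb (D m) (D (n * m)) (id) (id)) id"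
    proof (cases "m = 1")
      case True thus ?thesis by (simp add: homeomorphic_map_id)
    next
      case False
      hence "D m = \<tau>'" by (simp add: D_def)
      thus ?thesis unfolding pb_id
        by (intro diag_homeo[of _ X]) (use tsD opD assms(3) in auto)
    qed
    show "\<forall>p\<in>topspace (pb (D m) (D n) (id) (id)).
           id (snd (id p)) = id (fst p) \<and> id (snd (id p)) = id (snd p)"
      by (auto simp: pb_id)
  qed
  show "strong_partial_action \<tau> (\<lambda>m::'m. if m = 1 then \<tau> else \<tau>') (\<lambda>m. id) (\<lambda>m. id)"
    unfolding strong_partial_action_def D_def[symmetric] using pad h1 h2 by blast
  show "\<not> (\<exists>(Y :: 'y topology) \<beta> \<iota>. global_action Y \<beta> \<and> top_mono \<tau> Y \<iota> \<and>
              is_restriction \<tau> (\<lambda>m::'m. if m = 1 then \<tau> else \<tau>') (\<lambda>m. id) (\<lambda>m. id) Y \<beta> \<iota>)"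
  proof
    assume "\<exists>(Y :: 'y topology) \<beta> \<iota>. global_action Y \<beta> \<and> top_mono \<tau> Y \<iota> \<and>
              is_restriction \<tau> (\<lambda>m::'m. if m = 1 then \<tau> else \<tau>') (\<lambda>m. id) (\<lambda>m. id) Y \<beta> \<iota>"
    then obtain Y :: "'y topology" and \<beta> \<iota> where
      R: "\<forall>m. is_pullback_square \<tau> \<tau> Y (\<lambda>x. \<beta> m (\<iota> x)) \<iota> (D m) id id"
      unfolding is_restriction_def D_def by blast
    obtain m0 :: 'm where m0: "m0 \<noteq> 1" using nontriv by blast
    have c0: "\<forall>x\<in>X. \<beta> m0 (\<iota> x) = \<iota> x"
      and H0: "homeomorphic_map \<tau>' (pb \<tau> \<tau> (\<lambda>x. \<beta> m0 (\<iota> x)) \<iota>) (\<lambda>x. (x, x))"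
      using R[rule_format, of m0] m0 assms(3) unfolding is_pullback_square_def D_def by auto
    have c1: "\<forall>x\<in>X. \<beta> 1 (\<iota> x) = \<iota> x"
      and H1: "homeomorphic_map \<tau> (pb \<tau> \<tau> (\<lambda>x. \<beta> 1 (\<iota> x)) \<iota>) (\<lambda>x. (x, x))"
      using R[rule_format, of 1] assms(2) unfolding is_pullback_square_def D_def by auto
    have "topspace (prod_topology \<tau> \<tau>) \<inter> {(a, b). \<beta> m0 (\<iota> a) = \<iota> b}
        = topspace (prod_topology \<tau> \<tau>) \<inter> {(a, b). \<beta> 1 (\<iota> a) = \<iota> b}"
      using c0 c1 assms(2) by auto
    hence eq: "pb \<tau> \<tau> (\<lambda>x. \<beta> m0 (\<iota> x)) \<iota> = pb \<tau> \<tau> (\<lambda>x. \<beta> 1 (\<iota> x)) \<iota>"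
      unfolding pb_def by (metis subtopology_restrict)
    have "openin \<tau> U" if "openin \<tau>' U" for U
    proof -
      have U: "U \<subseteq> X" using that openin_subset assms(3) by metis
      have "openin (pb \<tau> \<tau> (\<lambda>x. \<beta> m0 (\<iota> x)) \<iota>) ((\<lambda>x. (x, x)) ` U)"
        using homeomorphic_map_openness[OF H0] U assms(3) that by simp
      thus ?thesis
        using homeomorphic_map_openness[OF H1] U assms(2) eq by simp
    qed
    hence "\<tau>' = \<tau>" using assms(4) by (metis topology_eq)
    thus False using assms(5) by simp
  qed
qed

end
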